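(* Let $q\equiv 3\pmod 4$ be a prime power, let $P=\{(x,y,z)\in\mathbb{F}_q^3 : z=x^2+y^2\}$, and let $a,b,c,d\in P$. Then $a+b=c+d$ if and only if $\underline{a},\underline{c},\underline{b},\underline{d}$ (in this cyclic order) form a rectangle in $\mathbb{F}_q^2$.
   Context: Every point of $P$ is written as $x=(\underline{x},\underline{x}\cdot\underline{x})$ with $\underline{x}\in\mathbb{F}_q^2$, where $u\cdot v=u_1v_1+u_2v_2$. Four points $x,z,y,t\in\mathbb{F}_q^2$ form a rectangle with vertices in the cyclic order $x,z,y,t$ if $(x-z)\cdot(y-z)=0$, $(z-y)\cdot(t-y)=0$, $(y-t)\cdot(x-t)=0$ and $(t-x)\cdot(z-x)=0$ (right angles at every vertex). *)

theory Defs
  imports Main "HOL-Library.Product_Plus"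
begin

definition dot2 :: "'a::comm_ring \<times> 'a \<Rightarrow> 'a \<times> 'a \<Rightarrow> 'a" where
  "dot2 u v = fst u * fst v + snd u * snd v"

definition rectangle :: "'a::comm_ring \<times> 'a \<Rightarrow> 'a \<times> 'a \<Rightarrow> 'a \<times> 'a \<Rightarrow> 'a \<times> 'a \<Rightarrow> bool" where
  "rectangle x z y t \<longleftrightarrow>
     dot2 (x - z) (y - z) = 0 \<and> dot2 (z - y) (t - y) = 0 \<and>
     dot2 (y - t) (x - t) = 0 \<and> dot2 (t - x) (z - x) = 0"

definition paraboloid :: "('a::comm_ring_1 \<times> 'a \<times> 'a) set" where
  "paraboloid = {(x, y, z). z = x\<^sup>2 + y\<^sup>2}"

definition ul :: "'a \<times> 'a \<times> 'a \<Rightarrow> 'a \<times> 'a" where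
  "ul p = (fst p, fst (snd p))"

end

theory Submission
  imports Defs
begin

lemma two_nz:
  assumes q: "card (UNIV :: 'a::{finite, field} set) mod 4 = 3"
  shows "(2::'a) \<noteq> 0"
proof
  assume h: "(2::'a) = 0"
  have "(\<Sum>x\<in>(UNIV::'a set). x + 1) = (\<Sum>x\<in>UNIV. x)"
    by (rule sum.reindex_bij_witness[where i="\<lambda>x. x - 1" and j="\<lambda>x. x + 1"]) auto
  hence "of_nat (card (UNIV::'a set)) = (0::'a)"
    by (simp add: sum.distrib)
  moreover obtain k where "card (UNIV::'a set) = 4*k+3" using q by (metis mod_mult_div_eq add.commute)
  ultimately have "of_nat (4*k+3) = (0::'a)" by simp
  moreover have "of_nat (4*k+3) = (2::'a) * (2 * of_nat k + 1) + 1" by (simp add: algebra_simps)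
  ultimately show False using h by simp
qed

lemma no_sqrt_m1:
  assumes q: "card (UNIV :: 'a::{finite, field} set) mod 4 = 3"
  shows "(i::'a) * i \<noteq> -1"
proof
  assume h: "i * i = -1"
  hence i0: "i \<noteq> 0" by auto
  let ?A = "UNIV - {0::'a}"
  have "(\<Prod>x\<in>?A. i * x) = (\<Prod>x\<in>?A. x)"
    by (rule prod.reindex_bij_witness[where i="\<lambda>x. x / i" and j="\<lambda>x. i * x"]) (use i0 in auto)
  hence "i ^ card ?A * (\<Prod>x\<in>?A. x) = (\<Prod>x\<in>?A. x)"
    by (simp add: prod.distrib)
  moreover have "(\<Prod>x\<in>?A. x) \<noteq> 0" by simp
  ultimately have e: "i ^ card ?A = 1" by simp
  obtain k where "card (UNIV::'a set) = 4*k+3" using q by (metis mod_mult_div_eq add.commute)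
  hence "card ?A = 4*k+2" by (simp add: card_Diff_singleton)
  hence "i ^ card ?A = (i*i) ^ (2*k+1)" by (simp add: power_mult power2_eq_square[symmetric] flip: power_mult_distrib)
  also have "\<dots> = -1" using h by simp
  finally have "(2::'a) = 0" using e by (simp add: eq_neg_iff_add_eq_0)
  with two_nz[OF q] show False by simp
qed

lemma iso:
  assumes q: "card (UNIV :: 'a::{finite, field} set) mod 4 = 3"
  and "(x::'a) * x + y * y = 0"
  shows "x = 0 \<and> y = 0"
proof (cases "x = 0")
  case True thus ?thesis using assms by simp
next
  case False
  have "(y/x) * (y/x) = -1" using assms(2) False by (simp add: field_simps add_eq_0_iff)
  with no_sqrt_m1[OF q] show ?thesis by blast
qed

theorem lemma2p1:
  fixes a b c d :: "'a::{finite, field} \<times> 'a \<times> 'a"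
  assumes q: "card (UNIV :: 'a set) mod 4 = 3"
    and P: "a \<in> paraboloid" "b \<in> paraboloid" "c \<in> paraboloid" "d \<in> paraboloid"
  shows "a + b = c + d \<longleftrightarrow> rectangle (ul a) (ul c) (ul b) (ul d)"
proof -
  obtain a1 a2 b1 b2 c1 c2 d1 d2 where
    abcd: "a = (a1, a2, a1^2+a2^2)" "b = (b1, b2, b1^2+b2^2)"
     "c = (c1, c2, c1^2+c2^2)" "d = (d1, d2, d1^2+d2^2)"
    using P unfolding paraboloid_def by auto
  have t: "(2::'a) \<noteq> 0" by (rule two_nz[OF q])
  show ?thesis
  proof
    assume "a + b = c + d"
    hence e1: "d1 = a1+b1-c1" and e2: "d2 = a2+b2-c2"
      and e3: "a1^2+a2^2+(b1^2+b2^2) = c1^2+c2^2+(d1^2+d2^2)"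
      using abcd by (auto simp: algebra_simps)
    have "2 * ((a1-c1)*(b1-c1) + (a2-c2)*(b2-c2)) = 0"
      using e3 unfolding e1 e2 by (simp add: algebra_simps power2_eq_square)
    hence k: "(a1-c1)*(b1-c1) + (a2-c2)*(b2-c2) = 0" using t by (metis mult_eq_0_iff)
    show "rectangle (ul a) (ul c) (ul b) (ul d)"
      unfolding rectangle_def dot2_def abcd ul_def e1 e2
      using k by (simp add: algebra_simps) (use k in \<open>simp add: algebra_simps\<close>)?
  next
    assume r: "rectangle (ul a) (ul c) (ul b) (ul d)"
    define e1 where "e1 = d1 - (a1+b1-c1)"
    define e2 where "e2 = d2 - (a2+b2-c2)"
    have h: "(a1-c1)*(b1-c1)+(a2-c2)*(b2-c2) = 0" "(c1-b1)*(d1-b1)+(c2-b2)*(d2-b2) = 0"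
      "(b1-d1)*(a1-d1)+(b2-d2)*(a2-d2) = 0" "(d1-a1)*(c1-a1)+(d2-a2)*(c2-a2) = 0"
      using r unfolding rectangle_def dot2_def abcd ul_def by auto
    have "e1*e1+e2*e2 = 0"
      unfolding e1_def e2_def using h by algebra
    hence "e1 = 0 \<and> e2 = 0" by (rule iso[OF q])
    hence d: "d1 = a1+b1-c1" "d2 = a2+b2-c2" unfolding e1_def e2_def by auto
    have "a1^2+a2^2+(b1^2+b2^2) = c1^2+c2^2+(d1^2+d2^2)"
      using h(1) unfolding d by (simp add: algebra_simps power2_eq_square) algebra?
    thus "a + b = c + d" unfolding abcd d by simp
  qed
qed

end
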